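(* Let $v$ be any vertex of a Euclidean minimum spanning tree of a finite point set in the plane. Then: (i) if $\deg(v)=3$, there exists an angle at $v$ that is at most $120^\circ$; (ii) if $\deg(v)=4$, there exist two nonadjacent angles at $v$ that are at most $90^\circ$ and $120^\circ$, respectively; (iii) if $\deg(v)=5$, then all angles at $v$ are at most $120^\circ$, and there exist two nonadjacent angles at $v$ that are at most $90^\circ$.
   Context: Angles are measured in degrees. For a vertex $v$ of degree at least $3$ in the minimum spanning tree, sort its incident edges radially around $v$; an angle at $v$ is the angle between two radially consecutive incident edges. Two angles at $v$ are adjacent if they share a bounding edge, and nonadjacent otherwise. $\deg(v)$ denotes the degree of $v$ in the tree. *)

theory Defs
  imports "HOL-Analysis.Analysis"
begin

text \<open>Points of the plane are complex numbers. An undirected edge is a two-element set.\<close>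

definition tree_rel :: "complex set set \<Rightarrow> (complex \<times> complex) set" where
  "tree_rel T = {(x, y). {x, y} \<in> T}"

text \<open>A spanning tree of P: edges are pairs of distinct points of P, the graph is connected
 on P, and it is acyclic (every edge is a bridge: removing it disconnects its endpoints).\<close>
definition spanning_tree :: "complex set \<Rightarrow> complex set set \<Rightarrow> bool" where
  "spanning_tree P T \<longleftrightarrow>
     (\<forall>e\<in>T. \<exists>a b. e = {a, b} \<and> a \<noteq> b \<and> a \<in> P \<and> b \<in> P) \<and>
     (\<forall>a\<in>P. \<forall>b\<in>P. (a, b) \<in> (tree_rel T)\<^sup>*) \<and>
     (\<forall>e\<in>T. \<forall>a b. e = {a, b} \<longrightarrow> (a, b) \<notin> (tree_rel (T - {e}))\<^sup>*)"

definition edge_len :: "complex set \<Rightarrow> real" where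
  "edge_len e = (THE d. \<exists>a b. e = {a, b} \<and> d = dist a b)"

definition tree_weight :: "complex set set \<Rightarrow> real" where
  "tree_weight T = (\<Sum>e\<in>T. edge_len e)"

definition euclidean_mst :: "complex set \<Rightarrow> complex set set \<Rightarrow> bool" where
  "euclidean_mst P T \<longleftrightarrow> spanning_tree P T \<and>
     (\<forall>T'. spanning_tree P T' \<longrightarrow> tree_weight T \<le> tree_weight T')"

definition nbrs :: "complex set set \<Rightarrow> complex \<Rightarrow> complex set" where
  "nbrs T v = {u. {v, u} \<in> T}"

text \<open>us is the list of neighbours of v in radial (counterclockwise) order, i.e. sorted by the
 direction angle Arg (u - v).\<close>
definition angle_at :: "complex \<Rightarrow> complex list \<Rightarrow> nat \<Rightarrow> real" where
  "angle_at v us i = (180 / pi) *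
     (if Suc i < length us then Arg (us ! Suc i - v) - Arg (us ! i - v)
      else 2 * pi + Arg (us ! 0 - v) - Arg (us ! i - v))"

definition bounding_edges :: "nat \<Rightarrow> nat \<Rightarrow> nat set" where
  "bounding_edges k i = {i, Suc i mod k}"

definition nonadjacent_angles :: "nat \<Rightarrow> nat \<Rightarrow> nat \<Rightarrow> bool" where
  "nonadjacent_angles k i j \<longleftrightarrow> i \<noteq> j \<and> bounding_edges k i \<inter> bounding_edges k j = {}"

end

theory Submission
  imports Defs
begin

lemma ReIm_Arg: "Re z = norm z * cos (Arg z) \<and> Im z = norm z * sin (Arg z)"
proof (cases "z = 0")
  case True then show ?thesis by simp
next
  case False
  have "sgn z = cis (Arg z)" using Arg_correct[OF False] by simp
  then have "z = complex_of_real (norm z) * cis (Arg z)"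
    proof -
    have "sgn z = z / complex_of_real (norm z)" by (simp add: sgn_div_norm scaleR_conv_of_real divide_inverse mult.commute)
    then show ?thesis using \<open>sgn z = cis (Arg z)\<close> False by (simp add: field_simps)
  qed
  then have "Re z = Re (complex_of_real (norm z) * cis (Arg z))" "Im z = Im (complex_of_real (norm z) * cis (Arg z))" by simp_all
  then show ?thesis by simp
qed

lemma geo:
  fixes z1 z2 :: complex
  assumes "z1 \<noteq> 0" "z2 \<noteq> 0" "norm z2 \<le> norm (z1 - z2)" "norm z1 \<le> norm (z1 - z2)"
  shows "cos (Arg z2 - Arg z1) \<le> 1/2"
proof -
  have r1: "Re z1 = norm z1 * cos (Arg z1)" "Im z1 = norm z1 * sin (Arg z1)" using ReIm_Arg by auto
  have r2: "Re z2 = norm z2 * cos (Arg z2)" "Im z2 = norm z2 * sin (Arg z2)" using ReIm_Arg by auto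
  have R: "Re z1 * Re z2 + Im z1 * Im z2 = norm z1 * norm z2 * cos (Arg z2 - Arg z1)"
    unfolding r1 r2 cos_diff by (simp add: algebra_simps)
  have n: "(norm (z1 - z2))^2 = (norm z1)^2 + (norm z2)^2 - 2 * (Re z1 * Re z2 + Im z1 * Im z2)"
    unfolding cmod_power2 by (simp add: power2_eq_square algebra_simps)
  have a: "(norm z2)^2 \<le> (norm (z1 - z2))^2" "(norm z1)^2 \<le> (norm (z1 - z2))^2"
    using assms by (auto intro!: power_mono)
  have p1: "norm z1 > 0" "norm z2 > 0" using assms by auto
  have b: "2 * (norm z1 * norm z2 * cos (Arg z2 - Arg z1)) \<le> (norm z1)^2"
     "2 * (norm z1 * norm z2 * cos (Arg z2 - Arg z1)) \<le> (norm z2)^2"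
    using a n R by auto
  have "2 * (norm z1 * norm z2 * cos (Arg z2 - Arg z1)) \<le> norm z1 * norm z2"
  proof (cases "norm z1 \<le> norm z2")
    case True then have "(norm z1)^2 \<le> norm z1 * norm z2" using p1 by (simp add: power2_eq_square mult_left_mono)
    then show ?thesis using b by linarith
  next
    case False then have "(norm z2)^2 \<le> norm z1 * norm z2" using p1 by (simp add: power2_eq_square mult_right_mono)
    then show ?thesis using b by linarith
  qed
  then have "norm z1 * norm z2 * (2 * cos (Arg z2 - Arg z1)) \<le> norm z1 * norm z2 * 1" by simp
  then have "2 * cos (Arg z2 - Arg z1) \<le> 1" using p1 by (simp add: mult_le_cancel_left_pos)
  then show ?thesis by simp
qed

lemma cos_half: assumes "0 \<le> d" "d \<le> 2*pi" "cos d \<le> 1/2" shows "d \<ge> pi/3"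
proof (rule ccontr)
  assume "\<not> d \<ge> pi/3"
  then have "cos (pi/3) < cos d" using assms pi_gt_zero by (intro cos_monotone_0_pi) auto
  then show False using assms by (simp add: cos_60)
qed
lemma edge_len_pair: "edge_len {x, y} = dist x y"
  unfolding edge_len_def
proof (rule the_equality)
  show "\<exists>a b. {x, y} = {a, b} \<and> dist x y = dist a b" by blast
next
  fix d assume "\<exists>a b. {x, y} = {a, b} \<and> d = dist a b"
  then obtain a b where "{x, y} = {a, b}" "d = dist a b" by blast
  then show "d = dist x y" by (auto simp: doubleton_eq_iff dist_commute)
qed

lemma tree_rel_sym: "(a, b) \<in> (tree_rel G)\<^sup>* \<Longrightarrow> (b, a) \<in> (tree_rel G)\<^sup>*"
proof -
  assume "(a, b) \<in> (tree_rel G)\<^sup>*"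
  then have "(b, a) \<in> ((tree_rel G)\<inverse>)\<^sup>*" by (rule rtrancl_converseI)
  moreover have "(tree_rel G)\<inverse> = tree_rel G" unfolding tree_rel_def by (auto simp: insert_commute)
  ultimately show ?thesis by simp
qed

definition valid_edges :: "complex set \<Rightarrow> complex set set \<Rightarrow> bool" where
  "valid_edges P G \<longleftrightarrow> (\<forall>e\<in>G. \<exists>a b. e = {a, b} \<and> a \<noteq> b \<and> a \<in> P \<and> b \<in> P)"

lemma valid_finite: "finite P \<Longrightarrow> valid_edges P G \<Longrightarrow> finite G"
proof -
  assume "finite P" "valid_edges P G"
  then have "G \<subseteq> Pow P" unfolding valid_edges_def by auto
  then show "finite G" using \<open>finite P\<close> by (meson finite_Pow_iff finite_subset)
qed

lemma valid_len_nonneg: "valid_edges P G \<Longrightarrow> e \<in> G \<Longrightarrow> edge_len e \<ge> 0"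
  unfolding valid_edges_def by (auto simp: edge_len_pair)

lemma exists_subtree:
  assumes "finite P" "valid_edges P G" "\<forall>a\<in>P. \<forall>b\<in>P. (a, b) \<in> (tree_rel G)\<^sup>*"
  shows "\<exists>T'. T' \<subseteq> G \<and> spanning_tree P T'"
  using assms
proof (induction "card G" arbitrary: G rule: less_induct)
  case less
  show ?case
  proof (cases "\<forall>e\<in>G. \<forall>a b. e = {a, b} \<longrightarrow> (a, b) \<notin> (tree_rel (G - {e}))\<^sup>*")
    case True
    then have "spanning_tree P G" using less.prems unfolding spanning_tree_def valid_edges_def by blast
    then show ?thesis by blast
  next
    case False
    then obtain e a b where e: "e \<in> G" "e = {a, b}" "(a, b) \<in> (tree_rel (G - {e}))\<^sup>*" by blast
    have sub: "tree_rel G \<subseteq> (tree_rel (G - {e}))\<^sup>*"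
    proof
      fix p assume "p \<in> tree_rel G"
      then obtain x y where p: "p = (x, y)" "{x, y} \<in> G" unfolding tree_rel_def by auto
      show "p \<in> (tree_rel (G - {e}))\<^sup>*"
      proof (cases "{x, y} = e")
        case True
        then have "(x = a \<and> y = b) \<or> (x = b \<and> y = a)" using e by (auto simp: doubleton_eq_iff)
        then show ?thesis using e(3) tree_rel_sym p by blast
      next
        case False
        then have "(x, y) \<in> tree_rel (G - {e})" using p unfolding tree_rel_def by auto
        then show ?thesis using p by auto
      qed
    qed
    have conn: "\<forall>a\<in>P. \<forall>b\<in>P. (a, b) \<in> (tree_rel (G - {e}))\<^sup>*"
      using less.prems(3) rtrancl_subset_rtrancl[OF sub] by blast
    have "finite G" using valid_finite less.prems by blast
    then have "card (G - {e}) < card G" using e(1) by (rule card_Diff1_less)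
    moreover have "valid_edges P (G - {e})" using less.prems(2) unfolding valid_edges_def by blast
    ultimately obtain T' where "T' \<subseteq> G - {e}" "spanning_tree P T'"
      using less.hyps less.prems(1) conn by blast
    then show ?thesis by blast
  qed
qed

lemma exchange:
  assumes "finite P" "euclidean_mst P T" "{v, a} \<in> T" "{v, b} \<in> T" "a \<noteq> b"
  shows "dist v b \<le> dist a b"
proof (rule ccontr)
  assume lt: "\<not> dist v b \<le> dist a b"
  have st: "spanning_tree P T" using assms(2) euclidean_mst_def by blast
  have vT: "valid_edges P T" using st unfolding spanning_tree_def valid_edges_def by blast
  have aP: "a \<in> P" "v \<in> P" using vT assms(3) unfolding valid_edges_def by (auto simp: doubleton_eq_iff)
  have bP: "b \<in> P" using vT assms(4) unfolding valid_edges_def by (auto simp: doubleton_eq_iff)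
  define G where "G = insert {a, b} (T - {{v, b}})"
  have vG: "valid_edges P G" using vT aP bP assms(5) unfolding G_def valid_edges_def by blast
  have ne: "{v, a} \<noteq> {v, b}" using assms(5) by (auto simp: doubleton_eq_iff)
  have sub: "tree_rel T \<subseteq> (tree_rel G)\<^sup>*"
  proof
    fix p assume "p \<in> tree_rel T"
    then obtain x y where p: "p = (x, y)" "{x, y} \<in> T" unfolding tree_rel_def by auto
    show "p \<in> (tree_rel G)\<^sup>*"
    proof (cases "{x, y} = {v, b}")
      case True
      have "(v, a) \<in> tree_rel G" using assms(3) ne unfolding G_def tree_rel_def by auto
      moreover have "(a, b) \<in> tree_rel G" unfolding G_def tree_rel_def by auto
      ultimately have vb: "(v, b) \<in> (tree_rel G)\<^sup>*" by auto
      have "(x = v \<and> y = b) \<or> (x = b \<and> y = v)" using True by (auto simp: doubleton_eq_iff)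
      then show ?thesis using vb tree_rel_sym p by blast
    next
      case False
      then have "(x, y) \<in> tree_rel G" using p unfolding G_def tree_rel_def by auto
      then show ?thesis using p by auto
    qed
  qed
  have conn: "\<forall>x\<in>P. \<forall>y\<in>P. (x, y) \<in> (tree_rel G)\<^sup>*"
    using st rtrancl_subset_rtrancl[OF sub] unfolding spanning_tree_def by blast
  obtain T' where T': "T' \<subseteq> G" "spanning_tree P T'" using exists_subtree[OF assms(1) vG conn] by blast
  have fG: "finite G" using valid_finite assms(1) vG by blast
  have fT: "finite T" using valid_finite assms(1) vT by blast
  have "tree_weight T \<le> tree_weight T'" using assms(2) T'(2) unfolding euclidean_mst_def by blast
  also have "\<dots> \<le> tree_weight G" unfolding tree_weight_def
    using fG T'(1) valid_len_nonneg[OF vG] by (intro sum_mono2) auto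
  also have "\<dots> \<le> edge_len {a, b} + sum edge_len (T - {{v, b}})"
  proof -
    have "sum edge_len (T - {{v, b}}) \<ge> 0" using valid_len_nonneg[OF vT] by (intro sum_nonneg) auto
    then show ?thesis unfolding tree_weight_def G_def using fT
      by (simp add: sum.insert_if dist_commute edge_len_pair)
  qed
  also have "\<dots> = dist a b + tree_weight T - dist v b"
    unfolding tree_weight_def using fT assms(4) by (simp add: sum_diff1 edge_len_pair)
  finally show False using lt by simp
qed

lemma deg_helper: "pi / 3 \<le> D \<Longrightarrow> 60 \<le> 180 / pi * D"
proof -
  assume "pi / 3 \<le> D"
  then have "180 / pi * (pi / 3) \<le> 180 / pi * D" by (rule mult_left_mono) auto
  then show ?thesis by simp
qed

lemma ang60:
  fixes P :: "complex set" and T :: "complex set set" and v :: complex and us :: "complex list"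
  assumes "finite P"
    and "euclidean_mst P T"
    and "distinct us"
    and "set us = nbrs T v"
    and "sorted (map (\<lambda>u. Arg (u - v)) us)"
    and "2 \<le> length us" "i < length us"
  shows "60 \<le> angle_at v us i"
proof -
  define k where "k = length us"
  define j where "j = (if Suc i < k then Suc i else 0)"
  have jk: "j < k" "j \<noteq> i" using assms(6,7) unfolding j_def k_def by auto
  define a where "a = us ! i"
  define b where "b = us ! j"
  have ab: "a \<noteq> b" unfolding a_def b_def using assms(3,7) jk nth_eq_iff_index_eq k_def by metis
  have inT: "{v, a} \<in> T" "{v, b} \<in> T" using assms(4,7) jk unfolding a_def b_def nbrs_def k_def
    by (metis mem_Collect_eq nth_mem)+
  have st: "spanning_tree P T" using assms(2) euclidean_mst_def by blast
  have "a \<noteq> v" "b \<noteq> v" using inT st unfolding spanning_tree_def by (auto simp: doubleton_eq_iff)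
  then have nz: "a - v \<noteq> 0" "b - v \<noteq> 0" by auto
  have d1: "dist v b \<le> dist a b" using exchange[OF assms(1,2) inT ab] .
  have d2: "dist v a \<le> dist b a" using exchange[OF assms(1,2) inT(2,1)] ab by auto
  have n1: "norm (b - v) \<le> norm ((a - v) - (b - v))" using d1 by (simp add: dist_norm norm_minus_commute)
  have n2: "norm (a - v) \<le> norm ((a - v) - (b - v))" using d2 by (simp add: dist_norm norm_minus_commute)
  have c: "cos (Arg (b - v) - Arg (a - v)) \<le> 1/2" using geo[OF nz n1 n2] .
  have bd: "- pi < Arg (a - v)" "Arg (a - v) \<le> pi" "- pi < Arg (b - v)" "Arg (b - v) \<le> pi"
    using Arg_bounded by auto
  have srt: "\<And>p q. p \<le> q \<Longrightarrow> q < k \<Longrightarrow> Arg (us ! p - v) \<le> Arg (us ! q - v)"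
    using sorted_nth_mono[OF assms(5)] unfolding k_def by fastforce
  show ?thesis
  proof (cases "Suc i < k")
    case True
    then have jj: "j = Suc i" unfolding j_def by simp
    have "Arg (a - v) \<le> Arg (b - v)" unfolding a_def b_def jj using srt True by simp
    then have "pi / 3 \<le> Arg (b - v) - Arg (a - v)" using bd c by (intro cos_half) auto
    then have "60 \<le> 180 / pi * (Arg (b - v) - Arg (a - v))" by (rule deg_helper)
    then show ?thesis unfolding angle_at_def using True jj k_def a_def b_def by simp
  next
    case False
    then have jj: "j = 0" unfolding j_def by simp
    have "Arg (b - v) \<le> Arg (a - v)" unfolding a_def b_def jj using srt assms(7) k_def by simp
    moreover have "cos (2 * pi + Arg (b - v) - Arg (a - v)) = cos (Arg (b - v) - Arg (a - v))"
      by (metis add_diff_eq add.commute cos_periodic)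
    ultimately have "pi / 3 \<le> 2 * pi + Arg (b - v) - Arg (a - v)" using bd c by (intro cos_half) auto
    then have "60 \<le> 180 / pi * (2 * pi + Arg (b - v) - Arg (a - v))" by (rule deg_helper)
    then show ?thesis unfolding angle_at_def using False jj k_def a_def b_def by simp
  qed
qed

lemma sum3: "length us = 3 \<Longrightarrow> angle_at v us 0 + angle_at v us 1 + angle_at v us 2 = 360"
  by (simp add: angle_at_def field_simps eval_nat_numeral)
lemma sum4: "length us = 4 \<Longrightarrow> angle_at v us 0 + angle_at v us 1 + angle_at v us 2 + angle_at v us 3 = 360"
  by (simp add: angle_at_def field_simps eval_nat_numeral)
lemma sum5: "length us = 5 \<Longrightarrow> angle_at v us 0 + angle_at v us 1 + angle_at v us 2 + angle_at v us 3 + angle_at v us 4 = 360"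
  by (simp add: angle_at_def field_simps eval_nat_numeral)

theorem lemma1:
  fixes P :: "complex set" and T :: "complex set set" and v :: complex and us :: "complex list"
  assumes "finite P"
    and "euclidean_mst P T"
    and "v \<in> P"
    and "distinct us"
    and "set us = nbrs T v"
    and "sorted (map (\<lambda>u. Arg (u - v)) us)"
  shows "(length us = 3 \<longrightarrow> (\<exists>i<3. angle_at v us i \<le> 120)) \<and>
         (length us = 4 \<longrightarrow> (\<exists>i<4. \<exists>j<4. nonadjacent_angles 4 i j \<and>
              angle_at v us i \<le> 90 \<and> angle_at v us j \<le> 120)) \<and>
         (length us = 5 \<longrightarrow> (\<forall>i<5. angle_at v us i \<le> 120) \<and>
              (\<exists>i<5. \<exists>j<5. nonadjacent_angles 5 i j \<and>
              angle_at v us i \<le> 90 \<and> angle_at v us j \<le> 90))"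
proof -
  have g: "\<And>i. 2 \<le> length us \<Longrightarrow> i < length us \<Longrightarrow> 60 \<le> angle_at v us i"
    using ang60[OF assms(1,2,4,5,6)] by blast
  have na4: "nonadjacent_angles 4 0 2" "nonadjacent_angles 4 2 0" "nonadjacent_angles 4 1 3" "nonadjacent_angles 4 3 1"
    by (auto simp: nonadjacent_angles_def bounding_edges_def)
  have na5: "nonadjacent_angles 5 0 2" "nonadjacent_angles 5 0 3" "nonadjacent_angles 5 1 3"
     "nonadjacent_angles 5 1 4" "nonadjacent_angles 5 2 4"
    by (auto simp: nonadjacent_angles_def bounding_edges_def)
  have lt: "(0::nat) < 4" "(1::nat) < 4" "(2::nat) < 4" "(3::nat) < 4" "(0::nat) < 5" "(1::nat) < 5" "(2::nat) < 5" "(3::nat) < 5" "(4::nat) < 5"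
    by auto
  have A: "length us = 3 \<longrightarrow> (\<exists>i<3. angle_at v us i \<le> 120)"
  proof
    assume l: "length us = 3"
    have "angle_at v us 0 \<le> 120 \<or> angle_at v us 1 \<le> 120 \<or> angle_at v us 2 \<le> 120"
      using sum3[OF l, of v] by linarith
    then show "\<exists>i<3. angle_at v us i \<le> 120" proof (elim disjE)
      assume "angle_at v us 0 \<le> 120" then show ?thesis by (intro exI[of _ 0]) simp
    next
      assume "angle_at v us 1 \<le> 120" then show ?thesis by (intro exI[of _ 1]) simp
    next
      assume "angle_at v us 2 \<le> 120" then show ?thesis by (intro exI[of _ 2]) simp
    qed
  qed
  have B: "length us = 4 \<longrightarrow> (\<exists>i<4. \<exists>j<4. nonadjacent_angles 4 i j \<and>
              angle_at v us i \<le> 90 \<and> angle_at v us j \<le> 120)"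
  proof
    assume l: "length us = 4"
    have s: "angle_at v us 0 + angle_at v us 1 + angle_at v us 2 + angle_at v us 3 = 360" using sum4[OF l, of v] .
    have b: "60 \<le> angle_at v us 0" "60 \<le> angle_at v us 1" "60 \<le> angle_at v us 2" "60 \<le> angle_at v us 3"
      using g l by auto
    consider "angle_at v us 0 \<le> 90 \<and> angle_at v us 2 \<le> 120"
      | "angle_at v us 2 \<le> 90 \<and> angle_at v us 0 \<le> 120"
      | "angle_at v us 1 \<le> 90 \<and> angle_at v us 3 \<le> 120"
      | "angle_at v us 3 \<le> 90 \<and> angle_at v us 1 \<le> 120"
      using s b by linarith
    then show "\<exists>i<4. \<exists>j<4. nonadjacent_angles 4 i j \<and> angle_at v us i \<le> 90 \<and> angle_at v us j \<le> 120"
    proof cases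
      case 1 then show ?thesis using na4 lt by blast
    next
      case 2 then show ?thesis using na4 lt by blast
    next
      case 3 then show ?thesis using na4 lt by blast
    next
      case 4 then show ?thesis using na4 lt by blast
    qed
  qed
  have C: "length us = 5 \<longrightarrow> (\<forall>i<5. angle_at v us i \<le> 120) \<and>
              (\<exists>i<5. \<exists>j<5. nonadjacent_angles 5 i j \<and>
              angle_at v us i \<le> 90 \<and> angle_at v us j \<le> 90)"
  proof
    assume l: "length us = 5"
    have s: "angle_at v us 0 + angle_at v us 1 + angle_at v us 2 + angle_at v us 3 + angle_at v us 4 = 360" using sum5[OF l, of v] .
    have b: "60 \<le> angle_at v us 0" "60 \<le> angle_at v us 1" "60 \<le> angle_at v us 2" "60 \<le> angle_at v us 3"
       "60 \<le> angle_at v us 4"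
      using g l by auto
    have all: "\<forall>i<5. angle_at v us i \<le> 120"
    proof (intro allI impI)
      fix i :: nat assume "i < 5"
      then have "i = 0 \<or> i = 1 \<or> i = 2 \<or> i = 3 \<or> i = 4" by auto
      then show "angle_at v us i \<le> 120" using s b by auto
    qed
    consider "angle_at v us 0 \<le> 90 \<and> angle_at v us 2 \<le> 90"
      | "angle_at v us 0 \<le> 90 \<and> angle_at v us 3 \<le> 90"
      | "angle_at v us 1 \<le> 90 \<and> angle_at v us 3 \<le> 90"
      | "angle_at v us 1 \<le> 90 \<and> angle_at v us 4 \<le> 90"
      | "angle_at v us 2 \<le> 90 \<and> angle_at v us 4 \<le> 90"
      using s b by linarith
    then have "\<exists>i<5. \<exists>j<5. nonadjacent_angles 5 i j \<and> angle_at v us i \<le> 90 \<and> angle_at v us j \<le> 90"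
    proof cases
      case 1 then show ?thesis using na5 lt by blast
    next
      case 2 then show ?thesis using na5 lt by blast
    next
      case 3 then show ?thesis using na5 lt by blast
    next
      case 4 then show ?thesis using na5 lt by blast
    next
      case 5 then show ?thesis using na5 lt by blast
    qed
    with all show "(\<forall>i<5. angle_at v us i \<le> 120) \<and> (\<exists>i<5. \<exists>j<5. nonadjacent_angles 5 i j \<and> angle_at v us i \<le> 90 \<and> angle_at v us j \<le> 90)" by blast
  qed
  show ?thesis using A B C by blast
qed

end
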